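(* Consider $n$ agents over a fixed undirected connected graph with symmetric nonnegative weights $a_{ij}$ ($a_{ij}>0$ iff $i,j$ are neighbors). Assume the CFP solution set $\mathbf{X}^*$ is non-empty and there is $K\ge0$ with $\|\nabla g_i^+(x)\|\le K$ for all $x$ and $i$. Let $\{\alpha(t)\},\{\beta(t)\}$ satisfy (a) $\alpha(t)\in[0,1]$, $\sum_t\alpha(t)=\infty$, $\sum_t\alpha^2(t)<\infty$; (b) $\beta(t)\ge0$, $\sum_t\beta(t)=\infty$, $\sum_t\beta^2(t)<\infty$. Let $0<h<\frac{1}{\max_{1\le i\le n}\sum_{j=1}^n a_{ij}}$. The states $x_i(t)\in\mathbb{R}^m$ evolve by $x_i(t+1)=x_i(t)+u_i(t)$ with $$y_i(t)=x_i(t)+h\sum_{j\in N_i}a_{ij}(x_j(t)-x_i(t)),\ \nabla_i(t)=\beta(t)\nabla g_i^+(y_i(t)),\ \xi_i(t)=y_i(t)-\nabla_i(t),$$ $$\varphi_i(t)=\alpha(t)\big(\xi_i(t)-P_{X_i}(\xi_i(t))\big),\ u_i(t)=h\sum_{j\in N_i}a_{ij}(x_j(t)-x_i(t))-\nabla_i(t)-\varphi_i(t).$$ Then the agents reach consensus asymptotically and there is $x^*\in\mathbf{X}^*$ with $\lim_{t\to\infty}x_i(t)=x^*$ for all $i$.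
   Context: For each $i$, $g_i:\mathbb{R}^m\to\mathbb{R}$ convex continuous, $X_i\subset\mathbb{R}^m$ closed convex, $X=\bigcap_iX_i$; the CFP asks for $x$ with $g_i(x)\le0$ for all $i$ and $x\in X$, with solution set $\mathbf{X}^*$. $g_i^+=\max[g_i,0]$; $\nabla g_i^+(y)$ a subgradient of $g_i^+$ at $y$ (chosen as $0$ if $g_i(y)\le0$ and as a subgradient of $g_i$ otherwise); $P_{X_i}$ Euclidean projection onto $X_i$. Consensus means $\|x_i(t)-x_j(t)\|\to0$ for all $i,j$. *)

theory Defs
  imports "HOL-Analysis.Analysis"
begin

definition graph_edges :: "nat \<Rightarrow> (nat \<Rightarrow> nat \<Rightarrow> real) \<Rightarrow> (nat \<times> nat) set" where
  "graph_edges n a = {(i, j). i < n \<and> j < n \<and> a i j > 0}"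

definition connected_graph :: "nat \<Rightarrow> (nat \<Rightarrow> nat \<Rightarrow> real) \<Rightarrow> bool" where
  "connected_graph n a \<longleftrightarrow> (\<forall>i<n. \<forall>j<n. (i, j) \<in> (graph_edges n a)\<^sup>*)"

definition cfp_solutions :: "nat \<Rightarrow> (nat \<Rightarrow> 'a \<Rightarrow> real) \<Rightarrow> (nat \<Rightarrow> 'a set) \<Rightarrow> 'a set" where
  "cfp_solutions n g X = {x. (\<forall>i<n. g i x \<le> 0) \<and> x \<in> (\<Inter>i\<in>{..<n}. X i)}"

text \<open>dgp is a selection of subgradients of g_i^+ = max (g_i) 0 as in the paper:
  0 where g_i(y) \<le> 0, and a subgradient of g_i otherwise.\<close>
definition is_plus_subgrad_selection ::
  "('a::real_inner \<Rightarrow> real) \<Rightarrow> ('a \<Rightarrow> 'a) \<Rightarrow> bool" where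
  "is_plus_subgrad_selection gi dgi \<longleftrightarrow>
     (\<forall>y. (gi y \<le> 0 \<longrightarrow> dgi y = 0) \<and>
          (gi y > 0 \<longrightarrow> (\<forall>z. gi z \<ge> gi y + dgi y \<bullet> (z - y))))"

end

theory Submission
  imports Defs
begin


locale cfp =
  fixes n :: nat
    and a :: "nat \<Rightarrow> nat \<Rightarrow> real"
    and g :: "nat \<Rightarrow> 'a::euclidean_space \<Rightarrow> real"
    and X :: "nat \<Rightarrow> 'a set"
    and dg :: "nat \<Rightarrow> 'a \<Rightarrow> 'a"
    and K h :: real
    and \<alpha> \<beta> :: "nat \<Rightarrow> real"
    and x :: "nat \<Rightarrow> nat \<Rightarrow> 'a"
  assumes n_pos: "n \<ge> 1"
    and a_symm: "\<And>i j. i < n \<Longrightarrow> j < n \<Longrightarrow> a i j = a j i"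
    and a_nonneg: "\<And>i j. i < n \<Longrightarrow> j < n \<Longrightarrow> a i j \<ge> 0"
    and conn: "connected_graph n a"
    and X_closed: "\<And>i. i < n \<Longrightarrow> closed (X i)"
    and X_convex: "\<And>i. i < n \<Longrightarrow> convex (X i)"
    and sol_nonempty: "cfp_solutions n g X \<noteq> {}"
    and dg_sel: "\<And>i. i < n \<Longrightarrow> is_plus_subgrad_selection (g i) (dg i)"
    and K_nonneg: "K \<ge> 0"
    and dg_bound: "\<And>i y. i < n \<Longrightarrow> norm (dg i y) \<le> K"
    and alpha_range: "\<And>t. 0 \<le> \<alpha> t \<and> \<alpha> t \<le> 1"
    and alpha_div: "\<not> summable \<alpha>"
    and alpha_sq: "summable (\<lambda>t. (\<alpha> t)\<^sup>2)"
    and beta_nonneg: "\<And>t. \<beta> t \<ge> 0"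
    and beta_div: "\<not> summable \<beta>"
    and beta_sq: "summable (\<lambda>t. (\<beta> t)\<^sup>2)"
    and h_pos: "h > 0"
    and h_bound: "h * Max ((\<lambda>i. \<Sum>j<n. a i j) ` {..<n}) < 1"
    and dyn: "\<And>t i. i < n \<Longrightarrow>
      (let y = x t i + h *\<^sub>R (\<Sum>j<n. a i j *\<^sub>R (x t j - x t i));
           grad = \<beta> t *\<^sub>R dg i y;
           \<xi> = y - grad;
           \<phi> = \<alpha> t *\<^sub>R (\<xi> - closest_point (X i) \<xi>);
           u = h *\<^sub>R (\<Sum>j<n. a i j *\<^sub>R (x t j - x t i)) - grad - \<phi>
       in x (Suc t) i = x t i + u)"
begin

definition "deg i = (\<Sum>j<n. a i j)"
definition "w i j = h * a i j + (if i = j then 1 - h * deg i else 0)"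
definition "y t i = x t i + h *\<^sub>R (\<Sum>j<n. a i j *\<^sub>R (x t j - x t i))"
definition "\<xi> t i = y t i - \<beta> t *\<^sub>R dg i (y t i)"
definition "P t i = closest_point (X i) (\<xi> t i)"
definition "d t i = norm (\<xi> t i - P t i)"
definition "gp i v = max (g i v) 0"
definition "S = cfp_solutions n g X"

lemma step: "i < n \<Longrightarrow> x (Suc t) i = \<xi> t i - \<alpha> t *\<^sub>R (\<xi> t i - P t i)"
  using dyn[of i t] unfolding \<xi>_def P_def y_def Let_def by (simp add: algebra_simps)

lemma deg_lt: "i < n \<Longrightarrow> h * deg i < 1"
proof -
  assume i: "i < n"
  have "deg i \<le> Max ((\<lambda>i. \<Sum>j<n. a i j) ` {..<n})"
    unfolding deg_def using i by (intro Max_ge) auto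
  hence "h * deg i \<le> h * Max ((\<lambda>i. \<Sum>j<n. a i j) ` {..<n})" using h_pos by simp
  thus ?thesis using h_bound by simp
qed

lemma w_nonneg: "i < n \<Longrightarrow> j < n \<Longrightarrow> w i j \<ge> 0"
  unfolding w_def using deg_lt[of i] a_nonneg[of i j] h_pos by auto

lemma w_diag_pos: "i < n \<Longrightarrow> w i i > 0"
  unfolding w_def using deg_lt[of i] a_nonneg[of i i] h_pos
  by (simp add: add_nonneg_pos)

lemma w_symm: "i < n \<Longrightarrow> j < n \<Longrightarrow> w i j = w j i"
  unfolding w_def using a_symm by auto

lemma w_row: "i < n \<Longrightarrow> (\<Sum>j<n. w i j) = 1"
  unfolding w_def deg_def by (simp add: sum.distrib sum_distrib_left[symmetric])

lemma w_col: "j < n \<Longrightarrow> (\<Sum>i<n. w i j) = 1"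
proof -
  assume j: "j < n"
  have "(\<Sum>i<n. w i j) = (\<Sum>i<n. w j i)" by (rule sum.cong) (auto simp: w_symm j)
  thus ?thesis using w_row[OF j] by simp
qed

lemma y_eq: "i < n \<Longrightarrow> y t i = (\<Sum>j<n. w i j *\<^sub>R x t j)"
proof -
  assume i: "i < n"
  have "(\<Sum>j<n. w i j *\<^sub>R x t j) = (\<Sum>j<n. (h * a i j) *\<^sub>R x t j) + (1 - h * deg i) *\<^sub>R x t i"
  proof -
    have "\<And>j. w i j *\<^sub>R x t j = (h * a i j) *\<^sub>R x t j + (if j = i then (1 - h * deg i) *\<^sub>R x t i else 0)"
      by (simp add: w_def scaleR_add_left)
    hence "(\<Sum>j<n. w i j *\<^sub>R x t j) = (\<Sum>j<n. (h * a i j) *\<^sub>R x t j + (if j = i then (1 - h * deg i) *\<^sub>R x t i else 0))"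
      by simp
    also have "\<dots> = (\<Sum>j<n. (h * a i j) *\<^sub>R x t j) + (1 - h * deg i) *\<^sub>R x t i"
      by (simp add: sum.distrib i)
    finally show ?thesis .
  qed
  also have "\<dots> = y t i"
    unfolding y_def deg_def
    by (simp add: scaleR_diff_right sum_subtractf scaleR_sum_right scaleR_sum_left[symmetric] algebra_simps)
  finally show ?thesis by simp
qed

end



lemma norm_add_sq: "(norm (a + b))\<^sup>2 = (norm a)\<^sup>2 + 2 * inner a b + (norm (b::'a::real_inner))\<^sup>2"
  by (simp add: power2_norm_eq_inner inner_add_left inner_add_right inner_commute)

lemma norm_diff_scale_sq: "(norm (a - r *\<^sub>R b))\<^sup>2 = inner a a - 2 * r * inner b a + r\<^sup>2 * inner b (b::'a::real_inner)"
proof -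
  have "(norm (a - r *\<^sub>R b))\<^sup>2 = inner (a - r *\<^sub>R b) (a - r *\<^sub>R b)" by (rule power2_norm_eq_inner)
  also have "\<dots> = inner a a - 2 * r * inner b a + r\<^sup>2 * inner b b"
    by (simp add: inner_diff_left inner_diff_right inner_commute power2_eq_square algebra_simps)
  finally show ?thesis .
qed

lemma variance_identity:
  fixes xx :: "nat \<Rightarrow> 'a::real_inner" and ww :: "nat \<Rightarrow> real"
  assumes "(\<Sum>j<n. ww j) = 1"
  shows "(\<Sum>j<n. ww j * (norm (xx j - z))\<^sup>2) =
         (norm ((\<Sum>j<n. ww j *\<^sub>R xx j) - z))\<^sup>2 + (\<Sum>j<n. ww j * (norm (xx j - (\<Sum>j<n. ww j *\<^sub>R xx j)))\<^sup>2)"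
proof -
  define yy where "yy = (\<Sum>j<n. ww j *\<^sub>R xx j)"
  have e: "\<And>j. (norm (xx j - z))\<^sup>2 = (norm (xx j - yy))\<^sup>2 + 2 * inner (xx j - yy) (yy - z) + (norm (yy - z))\<^sup>2"
  proof -
    fix j
    have "xx j - z = (xx j - yy) + (yy - z)" by simp
    thus "?thesis j" using norm_add_sq[of "xx j - yy" "yy - z"] by simp
  qed
  have z: "(\<Sum>j<n. ww j * inner (xx j - yy) (yy - z)) = 0"
  proof -
    have "(\<Sum>j<n. ww j * inner (xx j - yy) (yy - z)) = inner (\<Sum>j<n. ww j *\<^sub>R (xx j - yy)) (yy - z)"
      by (simp add: inner_sum_left)
    also have "(\<Sum>j<n. ww j *\<^sub>R (xx j - yy)) = yy - (\<Sum>j<n. ww j) *\<^sub>R yy"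
      by (simp add: scaleR_diff_right sum_subtractf yy_def scaleR_sum_left)
    also have "\<dots> = 0" using assms by simp
    finally show ?thesis by simp
  qed
  have "(\<Sum>j<n. ww j * (norm (xx j - z))\<^sup>2) = (\<Sum>j<n. ww j * (norm (xx j - yy))\<^sup>2
      + 2 * (ww j * inner (xx j - yy) (yy - z)) + ww j * (norm (yy - z))\<^sup>2)"
    by (rule sum.cong[OF refl], simp only: e ring_distribs mult.assoc mult.left_commute)
  also have "\<dots> = (\<Sum>j<n. ww j * (norm (xx j - yy))\<^sup>2)
      + 2 * (\<Sum>j<n. ww j * inner (xx j - yy) (yy - z)) + (\<Sum>j<n. ww j) * (norm (yy - z))\<^sup>2"
    by (simp only: sum.distrib sum_distrib_left sum_distrib_right)
  also have "\<dots> = (norm (yy - z))\<^sup>2 + (\<Sum>j<n. ww j * (norm (xx j - yy))\<^sup>2)"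
    using z assms by simp
  finally show ?thesis unfolding yy_def .
qed

context cfp begin

lemma X_ne: "i < n \<Longrightarrow> X i \<noteq> {}"
  using sol_nonempty unfolding cfp_solutions_def by auto

lemma S_X: "z \<in> S \<Longrightarrow> i < n \<Longrightarrow> z \<in> X i"
  unfolding S_def cfp_solutions_def by auto

lemma S_g: "z \<in> S \<Longrightarrow> i < n \<Longrightarrow> g i z \<le> 0"
  unfolding S_def cfp_solutions_def by auto

lemma alpha_nonneg: "\<alpha> t \<ge> 0" and alpha_le1: "\<alpha> t \<le> 1"
  using alpha_range by auto

lemma proj_ineq:
  assumes i: "i < n" and z: "z \<in> X i"
  shows "(norm (x (Suc t) i - z))\<^sup>2 \<le> (norm (\<xi> t i - z))\<^sup>2 - \<alpha> t * (d t i)\<^sup>2"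
proof -
  define e where "e = \<xi> t i - P t i"
  define v where "v = \<xi> t i - z"
  have dot: "inner e (z - P t i) \<le> 0"
    unfolding e_def P_def by (rule closest_point_dot[OF X_convex[OF i] X_closed[OF i] z])
  have ev: "inner e v \<ge> inner e e"
  proof -
    have "v = e + (P t i - z)" unfolding v_def e_def by simp
    hence "inner e v = inner e e + inner e (P t i - z)" by (simp add: inner_add_right)
    moreover have "inner e (P t i - z) = - inner e (z - P t i)"
      by (metis inner_minus_right minus_diff_eq)
    ultimately show ?thesis using dot by simp
  qed
  have "x (Suc t) i - z = v - \<alpha> t *\<^sub>R e" unfolding step[OF i] v_def e_def by simp
  hence "(norm (x (Suc t) i - z))\<^sup>2 = inner v v - 2 * \<alpha> t * inner e v + (\<alpha> t)\<^sup>2 * inner e e"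
    using norm_diff_scale_sq[of v "\<alpha> t" e] by simp
  also have "\<dots> \<le> inner v v - 2 * \<alpha> t * inner e e + \<alpha> t * inner e e"
  proof -
    have "2 * \<alpha> t * inner e e \<le> 2 * \<alpha> t * inner e v"
      using ev alpha_nonneg[of t] by (simp add: mult_left_mono)
    moreover have "(\<alpha> t)\<^sup>2 * inner e e \<le> \<alpha> t * inner e e"
    proof -
      have "(\<alpha> t)\<^sup>2 \<le> \<alpha> t" using alpha_nonneg[of t] alpha_le1[of t]
        by (simp add: power2_eq_square mult_left_le)
      thus ?thesis by (simp add: mult_right_mono)
    qed
    ultimately show ?thesis by linarith
  qed
  also have "\<dots> = (norm (\<xi> t i - z))\<^sup>2 - \<alpha> t * (d t i)\<^sup>2"
    unfolding d_def v_def e_def by (simp add: power2_norm_eq_inner)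
  finally show ?thesis .
qed

lemma gp_nonneg: "gp i v \<ge> 0" unfolding gp_def by simp

lemma subgrad_ineq:
  assumes i: "i < n" and gz: "g i z \<le> 0"
  shows "inner (dg i v) (v - z) \<ge> gp i v"
proof (cases "g i v \<le> 0")
  case True
  then show ?thesis using dg_sel[OF i] unfolding is_plus_subgrad_selection_def gp_def by simp
next
  case False
  hence "g i z \<ge> g i v + inner (dg i v) (z - v)"
    using dg_sel[OF i] unfolding is_plus_subgrad_selection_def by auto
  moreover have "inner (dg i v) (z - v) = - inner (dg i v) (v - z)"
    by (metis inner_minus_right minus_diff_eq)
  ultimately show ?thesis using gz False unfolding gp_def by simp
qed

lemma grad_ineq:
  assumes i: "i < n" and gz: "g i z \<le> 0"
  shows "(norm (\<xi> t i - z))\<^sup>2 \<le> (norm (y t i - z))\<^sup>2 - 2 * \<beta> t * gp i (y t i) + (\<beta> t)\<^sup>2 * K\<^sup>2"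
proof -
  define v where "v = dg i (y t i)"
  define u where "u = y t i - z"
  have "\<xi> t i - z = u - \<beta> t *\<^sub>R v" unfolding \<xi>_def u_def v_def by simp
  hence "(norm (\<xi> t i - z))\<^sup>2 = inner u u - 2 * \<beta> t * inner v u + (\<beta> t)\<^sup>2 * inner v v"
    using norm_diff_scale_sq[of u "\<beta> t" v] by simp
  also have "\<dots> \<le> inner u u - 2 * \<beta> t * gp i (y t i) + (\<beta> t)\<^sup>2 * K\<^sup>2"
  proof -
    have "gp i (y t i) \<le> inner v u" unfolding u_def v_def by (rule subgrad_ineq[OF i gz])
    hence "2 * \<beta> t * gp i (y t i) \<le> 2 * \<beta> t * inner v u" using beta_nonneg[of t] by (simp add: mult_left_mono)
    moreover have "inner v v \<le> K\<^sup>2"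
      using dg_bound[OF i, of "y t i"] unfolding v_def
      by (metis norm_ge_zero power2_norm_eq_inner power_mono)
    hence "(\<beta> t)\<^sup>2 * inner v v \<le> (\<beta> t)\<^sup>2 * K\<^sup>2" by (simp add: mult_left_mono)
    ultimately show ?thesis by linarith
  qed
  also have "inner u u = (norm (y t i - z))\<^sup>2" unfolding u_def by (simp add: power2_norm_eq_inner)
  finally show ?thesis .
qed

definition "V z t = (\<Sum>i<n. (norm (x t i - z))\<^sup>2)"
definition "Dis t = (\<Sum>i<n. \<Sum>j<n. w i j * (norm (x t j - y t i))\<^sup>2)"
definition "Gs t = \<beta> t * (\<Sum>i<n. gp i (y t i))"
definition "Hs t = \<alpha> t * (\<Sum>i<n. (d t i)\<^sup>2)"

lemma Dis_nonneg: "Dis t \<ge> 0"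
  unfolding Dis_def by (intro sum_nonneg mult_nonneg_nonneg w_nonneg) auto
lemma Gs_nonneg: "Gs t \<ge> 0"
  unfolding Gs_def by (intro mult_nonneg_nonneg sum_nonneg beta_nonneg gp_nonneg)
lemma Hs_nonneg: "Hs t \<ge> 0"
  unfolding Hs_def by (intro mult_nonneg_nonneg sum_nonneg alpha_nonneg) auto

lemma mix_ineq:
  "(\<Sum>i<n. (norm (y t i - z))\<^sup>2) = V z t - Dis t"
proof -
  have "(\<Sum>i<n. (norm (y t i - z))\<^sup>2) = (\<Sum>i<n. (\<Sum>j<n. w i j * (norm (x t j - z))\<^sup>2) - (\<Sum>j<n. w i j * (norm (x t j - y t i))\<^sup>2))"
  proof (rule sum.cong[OF refl])
    fix i assume "i \<in> {..<n}" hence i: "i < n" by simp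
    show "(norm (y t i - z))\<^sup>2 = (\<Sum>j<n. w i j * (norm (x t j - z))\<^sup>2) - (\<Sum>j<n. w i j * (norm (x t j - y t i))\<^sup>2)"
      using variance_identity[where n=n and ww="w i" and xx="x t" and z=z, OF w_row[OF i]] y_eq[OF i, of t] by simp
  qed
  also have "\<dots> = (\<Sum>i<n. \<Sum>j<n. w i j * (norm (x t j - z))\<^sup>2) - Dis t"
    unfolding Dis_def by (simp add: sum_subtractf)
  also have "(\<Sum>i<n. \<Sum>j<n. w i j * (norm (x t j - z))\<^sup>2) = (\<Sum>j<n. (\<Sum>i<n. w i j) * (norm (x t j - z))\<^sup>2)"
    by (subst sum.swap) (simp add: sum_distrib_right)
  also have "\<dots> = V z t" unfolding V_def by (intro sum.cong) (auto simp: w_col)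
  finally show ?thesis .
qed

lemma fejer:
  assumes z: "z \<in> S"
  shows "V z (Suc t) \<le> V z t - (Dis t + 2 * Gs t + Hs t) + n * (\<beta> t)\<^sup>2 * K\<^sup>2"
proof -
  have "V z (Suc t) \<le> (\<Sum>i<n. (norm (y t i - z))\<^sup>2 - 2 * \<beta> t * gp i (y t i) + (\<beta> t)\<^sup>2 * K\<^sup>2 - \<alpha> t * (d t i)\<^sup>2)"
    unfolding V_def
  proof (rule sum_mono)
    fix i assume "i \<in> {..<n}" hence i: "i < n" by simp
    show "(norm (x (Suc t) i - z))\<^sup>2 \<le> (norm (y t i - z))\<^sup>2 - 2 * \<beta> t * gp i (y t i) + (\<beta> t)\<^sup>2 * K\<^sup>2 - \<alpha> t * (d t i)\<^sup>2"
      using proj_ineq[OF i S_X[OF z i], of t] grad_ineq[OF i S_g[OF z i], of t] by linarith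
  qed
  also have "\<dots> = (\<Sum>i<n. (norm (y t i - z))\<^sup>2) - 2 * Gs t + n * (\<beta> t)\<^sup>2 * K\<^sup>2 - Hs t"
    unfolding Gs_def Hs_def by (simp add: sum.distrib sum_subtractf sum_distrib_left algebra_simps)
  also have "\<dots> = V z t - (Dis t + 2 * Gs t + Hs t) + n * (\<beta> t)\<^sup>2 * K\<^sup>2"
    using mix_ineq[of t z] by simp
  finally show ?thesis .
qed

end



lemma quasi_fejer:
  fixes v u e :: "nat \<Rightarrow> real"
  assumes v0: "\<And>t. v t \<ge> 0" and u0: "\<And>t. u t \<ge> 0" and e0: "\<And>t. e t \<ge> 0"
    and se: "summable e" and rec: "\<And>t. v (Suc t) \<le> v t - u t + e t"
  shows "summable u" "\<exists>L. v \<longlonglongrightarrow> L"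
proof -
  define p where "p t = v t + (\<Sum>s<t. u s) - (\<Sum>s<t. e s)" for t
  have dec: "decseq p" unfolding decseq_Suc_iff
  proof
    fix t show "p (Suc t) \<le> p t" unfolding p_def using rec[of t] by simp
  qed
  have Ele: "\<And>t. (\<Sum>s<t. e s) \<le> suminf e" using sum_le_suminf[OF se] e0 by auto
  have plow: "\<And>t. - suminf e \<le> p t"
  proof -
    fix t
    have "0 \<le> (\<Sum>s<t. u s)" using u0 by (simp add: sum_nonneg)
    thus "- suminf e \<le> p t" unfolding p_def using v0[of t] Ele[of t] by linarith
  qed
  obtain Lp where Lp: "p \<longlonglongrightarrow> Lp" using decseq_convergent[OF dec, of "- suminf e"] plow by blast
  have ple: "\<And>t. p t \<le> p 0" using dec by (simp add: decseq_def)
  have ub: "\<And>t. (\<Sum>s<t. u s) \<le> v 0 + suminf e"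
  proof -
    fix t
    have "(\<Sum>s<t. u s) = p t - v t + (\<Sum>s<t. e s)" unfolding p_def by simp
    also have "\<dots> \<le> p 0 + suminf e" using ple[of t] v0[of t] Ele[of t] by linarith
    also have "p 0 = v 0" unfolding p_def by simp
    finally show "(\<Sum>s<t. u s) \<le> v 0 + suminf e" .
  qed
  show su: "summable u" by (rule summableI_nonneg_bounded[OF u0 ub])
  have "(\<lambda>t. p t - (\<Sum>s<t. u s) + (\<Sum>s<t. e s)) \<longlonglongrightarrow> Lp - suminf u + suminf e"
    by (intro tendsto_intros Lp summable_LIMSEQ su se)
  moreover have "(\<lambda>t. p t - (\<Sum>s<t. u s) + (\<Sum>s<t. e s)) = v" unfolding p_def by auto
  ultimately show "\<exists>L. v \<longlonglongrightarrow> L" by auto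
qed

lemma le_one_plus_sq: "(r::real) \<le> 1 + r\<^sup>2"
proof -
  have "0 \<le> (r - 1/2)\<^sup>2" by simp
  thus ?thesis by (simp add: power2_eq_square algebra_simps)
qed

context cfp begin

lemma V_nonneg: "V z t \<ge> 0" unfolding V_def by (simp add: sum_nonneg)

lemma sums_and_conv:
  assumes z: "z \<in> S"
  shows "summable Dis" "summable Gs" "summable Hs" "\<exists>L. V z \<longlonglongrightarrow> L"
proof -
  have se: "summable (\<lambda>t. real n * (\<beta> t)\<^sup>2 * K\<^sup>2)"
    using summable_mult2[OF summable_mult[OF beta_sq, of "real n"], of "K\<^sup>2"] by simp
  have e0: "\<And>t. real n * (\<beta> t)\<^sup>2 * K\<^sup>2 \<ge> 0" by simp
  have u0: "\<And>t. Dis t + 2 * Gs t + Hs t \<ge> 0" using Dis_nonneg Gs_nonneg Hs_nonneg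
    by (simp add: add_nonneg_nonneg)
  note qf = quasi_fejer[of "V z" "\<lambda>t. Dis t + 2 * Gs t + Hs t", OF V_nonneg u0 e0 se fejer[OF z]]
  show "\<exists>L. V z \<longlonglongrightarrow> L" by (rule qf(2))
  show "summable Dis"
    by (rule summable_comparison_test'[OF qf(1), of 0]) (use Dis_nonneg Gs_nonneg Hs_nonneg in auto)
  show "summable Gs"
    by (rule summable_comparison_test'[OF qf(1), of 0]) (use Dis_nonneg Gs_nonneg Hs_nonneg in auto)
  show "summable Hs"
    by (rule summable_comparison_test'[OF qf(1), of 0]) (use Dis_nonneg Gs_nonneg Hs_nonneg in auto)
qed

lemma S_ne: "S \<noteq> {}" using sol_nonempty unfolding S_def .

lemma summable_Dis: "summable Dis" and summable_Gs: "summable Gs" and summable_Hs: "summable Hs"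
  using sums_and_conv S_ne by auto

lemma x_bounded: "\<exists>z0 \<in> S. \<exists>B. \<forall>t i. i < n \<longrightarrow> norm (x t i - z0) \<le> B"
proof -
  obtain z0 where z0: "z0 \<in> S" using S_ne by auto
  obtain L where L: "V z0 \<longlonglongrightarrow> L" using sums_and_conv(4)[OF z0] by auto
  have "Bseq (V z0)" using L by (rule convergent_imp_Bseq[OF convergentI])
  then obtain B where B: "\<And>t. norm (V z0 t) \<le> B" using BseqE by metis
  have "\<forall>t i. i < n \<longrightarrow> norm (x t i - z0) \<le> 1 + B"
  proof (intro allI impI)
    fix t i assume i: "i < n"
    have "(norm (x t i - z0))\<^sup>2 \<le> V z0 t"
      unfolding V_def by (rule member_le_sum) (use i in auto)
    also have "\<dots> \<le> B" using B[of t] by simp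
    finally show "norm (x t i - z0) \<le> 1 + B" using le_one_plus_sq[of "norm (x t i - z0)"] by linarith
  qed
  thus ?thesis using z0 by blast
qed

lemma Dis_edge:
  assumes k: "k < n" and l: "l < n" and that: "k \<noteq> l"
  shows "w k k * (norm (x t k - y t k))\<^sup>2 + w k l * (norm (x t l - y t k))\<^sup>2 \<le> Dis t"
proof -
  have "w k k * (norm (x t k - y t k))\<^sup>2 + w k l * (norm (x t l - y t k))\<^sup>2
      = (\<Sum>j\<in>{k,l}. w k j * (norm (x t j - y t k))\<^sup>2)" using that by simp
  also have "\<dots> \<le> (\<Sum>j<n. w k j * (norm (x t j - y t k))\<^sup>2)"
    by (rule sum_mono2) (use k l w_nonneg[OF k] in auto)
  also have "\<dots> \<le> Dis t" unfolding Dis_def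
    by (rule member_le_sum[where f = "\<lambda>i. \<Sum>j<n. w i j * (norm (x t j - y t i))\<^sup>2"])
       (use k w_nonneg in \<open>auto intro!: sum_nonneg mult_nonneg_nonneg\<close>)
  finally show ?thesis .
qed

lemma Dis_lim: "Dis \<longlonglongrightarrow> 0" using summable_LIMSEQ_zero[OF summable_Dis] .

lemma sq_to_zero:
  fixes f :: "nat \<Rightarrow> 'b::real_normed_vector"
  assumes "(\<lambda>t. (norm (f t))\<^sup>2) \<longlonglongrightarrow> 0" shows "(\<lambda>t. norm (f t)) \<longlonglongrightarrow> 0"
proof -
  have "(\<lambda>t. sqrt ((norm (f t))\<^sup>2)) \<longlonglongrightarrow> sqrt 0" by (intro tendsto_intros assms)
  thus ?thesis by simp
qed

lemma edge_consensus:
  assumes "(k, l) \<in> graph_edges n a"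
  shows "(\<lambda>t. norm (x t k - x t l)) \<longlonglongrightarrow> 0"
proof (cases "k = l")
  case True then show ?thesis by simp
next
  case False
  from assms have k: "k < n" and l: "l < n" and akl: "a k l > 0" unfolding graph_edges_def by auto
  have wkl: "w k l > 0" unfolding w_def using False akl h_pos by simp
  define \<mu> where "\<mu> = min (w k k) (w k l)"
  have mu: "\<mu> > 0" unfolding \<mu>_def using wkl w_diag_pos[OF k] by simp
  have bound: "(norm (x t k - x t l))\<^sup>2 \<le> (2 / \<mu>) * Dis t" for t
  proof -
    define A where "A = norm (x t k - y t k)"
    define B where "B = norm (x t l - y t k)"
    have "norm (x t k - x t l) \<le> A + B" unfolding A_def B_def
      using norm_triangle_ineq4[of "x t k - y t k" "x t l - y t k"] by simp
    hence "(norm (x t k - x t l))\<^sup>2 \<le> (A + B)\<^sup>2" by (simp add: power_mono)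
    also have "\<dots> \<le> 2 * (A\<^sup>2 + B\<^sup>2)"
      using sum_squares_ge_zero[of "A - B" 0] by (simp add: power2_eq_square algebra_simps)
    also have "\<mu> * (A\<^sup>2 + B\<^sup>2) \<le> Dis t"
    proof -
      have "\<mu> * A\<^sup>2 \<le> w k k * A\<^sup>2" unfolding \<mu>_def by (simp add: mult_right_mono)
      moreover have "\<mu> * B\<^sup>2 \<le> w k l * B\<^sup>2" unfolding \<mu>_def by (simp add: mult_right_mono)
      ultimately show ?thesis using Dis_edge[OF k l False, of t] unfolding A_def B_def
        by (simp add: distrib_left)
    qed
    hence "2 * (A\<^sup>2 + B\<^sup>2) \<le> (2 / \<mu>) * Dis t" using mu by (simp add: field_simps)
    finally show ?thesis .
  qed
  have "(\<lambda>t. (norm (x t k - x t l))\<^sup>2) \<longlonglongrightarrow> 0"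
  proof (rule Lim_null_comparison[where g = "\<lambda>t. (2 / \<mu>) * Dis t"])
    show "\<forall>\<^sub>F t in sequentially. norm ((norm (x t k - x t l))\<^sup>2) \<le> 2 / \<mu> * Dis t"
      using bound by simp
    show "(\<lambda>t. 2 / \<mu> * Dis t) \<longlonglongrightarrow> 0" by (intro tendsto_mult_right_zero Dis_lim)
  qed
  thus ?thesis by (rule sq_to_zero)
qed

lemma consensus:
  assumes i: "i < n" and j: "j < n"
  shows "(\<lambda>t. norm (x t i - x t j)) \<longlonglongrightarrow> 0"
proof -
  have "(i, j) \<in> (graph_edges n a)\<^sup>*" using conn i j unfolding connected_graph_def by auto
  thus ?thesis
  proof (induction rule: rtrancl_induct)
    case base then show ?case by simp
  next
    case (step k l)
    have "(\<lambda>t. norm (x t i - x t k) + norm (x t k - x t l)) \<longlonglongrightarrow> 0 + 0"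
      by (intro tendsto_add step.IH edge_consensus step.hyps)
    hence z: "(\<lambda>t. norm (x t i - x t k) + norm (x t k - x t l)) \<longlonglongrightarrow> 0" by simp
    show ?case
    proof (rule Lim_null_comparison[OF _ z])
      have "norm (norm (x t i - x t l)) \<le> norm (x t i - x t k) + norm (x t k - x t l)" for t
      proof -
        have "x t i - x t l = (x t i - x t k) + (x t k - x t l)" by simp
        thus ?thesis using norm_triangle_ineq[of "x t i - x t k" "x t k - x t l"] by simp
      qed
      thus "\<forall>\<^sub>F t in sequentially. norm (norm (x t i - x t l)) \<le> norm (x t i - x t k) + norm (x t k - x t l)"
        by simp
    qed
  qed
qed

end



context cfp begin

definition "c t = (1 / real n) *\<^sub>R (\<Sum>i<n. x t i)"
definition "Gam v = (\<Sum>i<n. gp i v)"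
definition "Del v = (\<Sum>i<n. infdist v (X i))"

lemma n_real_pos: "real n > 0" using n_pos by simp

lemma beta_lim: "\<beta> \<longlonglongrightarrow> 0"
proof -
  have "(\<lambda>t. norm (\<beta> t)) \<longlonglongrightarrow> 0"
    by (rule sq_to_zero) (use summable_LIMSEQ_zero[OF beta_sq] in simp)
  thus ?thesis using tendsto_norm_zero_iff by blast
qed

lemma alpha_lim: "\<alpha> \<longlonglongrightarrow> 0"
proof -
  have "(\<lambda>t. norm (\<alpha> t)) \<longlonglongrightarrow> 0"
    by (rule sq_to_zero) (use summable_LIMSEQ_zero[OF alpha_sq] in simp)
  thus ?thesis using tendsto_norm_zero_iff by blast
qed

lemma x_c: assumes i: "i < n" shows "(\<lambda>t. norm (x t i - c t)) \<longlonglongrightarrow> 0"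
proof -
  have eq: "x t i - c t = (1 / real n) *\<^sub>R (\<Sum>j<n. x t i - x t j)" for t
  proof -
    have "(\<Sum>j<n. x t i - x t j) = real n *\<^sub>R x t i - (\<Sum>j<n. x t j)"
      by (simp add: sum_subtractf sum_constant_scaleR)
    hence "(1 / real n) *\<^sub>R (\<Sum>j<n. x t i - x t j) = x t i - (1 / real n) *\<^sub>R (\<Sum>j<n. x t j)"
      using n_real_pos by (simp add: scaleR_diff_right)
    thus ?thesis unfolding c_def by simp
  qed
  show ?thesis
  proof (rule Lim_null_comparison[where g = "\<lambda>t. (1 / real n) * (\<Sum>j<n. norm (x t i - x t j))"])
    have "norm (norm (x t i - c t)) \<le> 1 / real n * (\<Sum>j<n. norm (x t i - x t j))" for t
    proof -
      have "norm (norm (x t i - c t)) = 1 / real n * norm (\<Sum>j<n. x t i - x t j)"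
        unfolding eq using n_real_pos by simp
      also have "\<dots> \<le> 1 / real n * (\<Sum>j<n. norm (x t i - x t j))"
        using n_real_pos by (intro mult_left_mono norm_sum) auto
      finally show ?thesis .
    qed
    thus "\<forall>\<^sub>F t in sequentially. norm (norm (x t i - c t)) \<le> 1 / real n * (\<Sum>j<n. norm (x t i - x t j))"
      by simp
    show "(\<lambda>t. 1 / real n * (\<Sum>j<n. norm (x t i - x t j))) \<longlonglongrightarrow> 0"
      by (intro tendsto_mult_right_zero tendsto_null_sum consensus i) auto
  qed
qed

lemma y_x: assumes i: "i < n" shows "(\<lambda>t. norm (y t i - x t i)) \<longlonglongrightarrow> 0"
proof (rule Lim_null_comparison[where g = "\<lambda>t. h * (\<Sum>j<n. a i j * norm (x t j - x t i))"])
  have "norm (y t i - x t i) \<le> h * (\<Sum>j<n. a i j * norm (x t j - x t i))" for t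
  proof -
    have "norm (y t i - x t i) = h * norm (\<Sum>j<n. a i j *\<^sub>R (x t j - x t i))"
      unfolding y_def using h_pos by simp
    also have "\<dots> \<le> h * (\<Sum>j<n. norm (a i j *\<^sub>R (x t j - x t i)))"
      using h_pos by (intro mult_left_mono norm_sum) auto
    also have "(\<Sum>j<n. norm (a i j *\<^sub>R (x t j - x t i))) = (\<Sum>j<n. a i j * norm (x t j - x t i))"
      using a_nonneg[OF i] by (intro sum.cong) auto
    finally show ?thesis .
  qed
  thus "\<forall>\<^sub>F t in sequentially. norm (norm (y t i - x t i)) \<le> h * (\<Sum>j<n. a i j * norm (x t j - x t i))"
    by simp
  have "(\<lambda>t. a i j * norm (x t j - x t i)) \<longlonglongrightarrow> 0" if "j < n" for j
    by (intro tendsto_mult_right_zero consensus that i)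
  hence "\<And>j. j \<in> {..<n} \<Longrightarrow> (\<lambda>t. a i j * norm (x t j - x t i)) \<longlonglongrightarrow> 0" by simp
  hence "(\<lambda>t. (\<Sum>j<n. a i j * norm (x t j - x t i))) \<longlonglongrightarrow> 0"
    by (rule tendsto_null_sum)
  thus "(\<lambda>t. h * (\<Sum>j<n. a i j * norm (x t j - x t i))) \<longlonglongrightarrow> 0"
    by (rule tendsto_mult_right_zero)
qed

lemma xi_y_le: "i < n \<Longrightarrow> norm (\<xi> t i - y t i) \<le> \<beta> t * K"
  unfolding \<xi>_def using dg_bound[of i] beta_nonneg[of t] by (simp add: mult_left_mono)

lemma xi_y: assumes i: "i < n" shows "(\<lambda>t. norm (\<xi> t i - y t i)) \<longlonglongrightarrow> 0"
proof (rule Lim_null_comparison[where g = "\<lambda>t. \<beta> t * K"])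
  show "\<forall>\<^sub>F t in sequentially. norm (norm (\<xi> t i - y t i)) \<le> \<beta> t * K"
    using xi_y_le[OF i] by simp
  show "(\<lambda>t. \<beta> t * K) \<longlonglongrightarrow> 0" using tendsto_mult_left_zero[OF beta_lim] by simp
qed

lemma tri_lim:
  fixes p q r :: "nat \<Rightarrow> 'a"
  assumes "(\<lambda>t. norm (p t - q t)) \<longlonglongrightarrow> 0" "(\<lambda>t. norm (q t - r t)) \<longlonglongrightarrow> 0"
  shows "(\<lambda>t. norm (p t - r t)) \<longlonglongrightarrow> 0"
proof (rule Lim_null_comparison[where g = "\<lambda>t. norm (p t - q t) + norm (q t - r t)"])
  have "norm (p t - r t) \<le> norm (p t - q t) + norm (q t - r t)" for t
    using norm_triangle_ineq[of "p t - q t" "q t - r t"] by simp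
  thus "\<forall>\<^sub>F t in sequentially. norm (norm (p t - r t)) \<le> norm (p t - q t) + norm (q t - r t)" by simp
  show "(\<lambda>t. norm (p t - q t) + norm (q t - r t)) \<longlonglongrightarrow> 0" using tendsto_add[OF assms] by simp
qed

lemma y_c: "i < n \<Longrightarrow> (\<lambda>t. norm (y t i - c t)) \<longlonglongrightarrow> 0"
  using tri_lim[OF y_x x_c] by simp

lemma xi_c: "i < n \<Longrightarrow> (\<lambda>t. norm (\<xi> t i - c t)) \<longlonglongrightarrow> 0"
  using tri_lim[OF xi_y y_c] by simp

lemma gp_lip: assumes i: "i < n" shows "gp i u \<le> gp i v + K * norm (u - v)"
proof (cases "g i u \<le> 0")
  case True
  then show ?thesis unfolding gp_def using K_nonneg by simp
next
  case False
  hence "g i v \<ge> g i u + inner (dg i u) (v - u)"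
    using dg_sel[OF i] unfolding is_plus_subgrad_selection_def by auto
  moreover have "inner (dg i u) (v - u) \<ge> - (norm (dg i u) * norm (v - u))"
    using Cauchy_Schwarz_ineq2[of "dg i u" "v - u"] by (simp add: abs_le_iff)
  moreover have "norm (dg i u) * norm (v - u) \<le> K * norm (u - v)"
    using dg_bound[OF i] by (simp add: mult_right_mono norm_minus_commute)
  ultimately show ?thesis using False unfolding gp_def by simp
qed

lemma Gam_lip: "Gam u \<le> Gam v + real n * K * norm (u - v)"
proof -
  have "Gam u \<le> (\<Sum>i<n. gp i v + K * norm (u - v))" unfolding Gam_def
    by (rule sum_mono) (use gp_lip in auto)
  thus ?thesis unfolding Gam_def by (simp add: sum.distrib)
qed

lemma Del_lip: "Del u \<le> Del v + real n * norm (u - v)"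
proof -
  have "Del u \<le> (\<Sum>i<n. infdist v (X i) + norm (u - v))" unfolding Del_def
    by (rule sum_mono) (metis infdist_triangle dist_norm)
  thus ?thesis unfolding Del_def by (simp add: sum.distrib)
qed

lemma Gam_nonneg: "Gam v \<ge> 0" unfolding Gam_def by (simp add: sum_nonneg gp_nonneg)
lemma Del_nonneg: "Del v \<ge> 0" unfolding Del_def by (simp add: sum_nonneg infdist_nonneg)

lemma d_infdist: "i < n \<Longrightarrow> infdist (\<xi> t i) (X i) \<le> d t i"
  unfolding d_def P_def using infdist_le[OF closest_point_in_set[OF X_closed X_ne]]
  by (simp add: dist_norm)

lemma beta_bounded: "\<exists>Bb. \<forall>t. \<beta> t \<le> Bb"
proof -
  have "Bseq \<beta>" using beta_lim by (rule convergent_imp_Bseq[OF convergentI])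
  then obtain Bb where "\<And>t. norm (\<beta> t) \<le> Bb" using BseqE by metis
  thus ?thesis by (metis abs_le_D1 real_norm_def)
qed

lemma d_bounded: "\<exists>R. \<forall>t i. i < n \<longrightarrow> d t i \<le> R"
proof -
  obtain z0 B where z0: "z0 \<in> S" and B: "\<And>t i. i < n \<Longrightarrow> norm (x t i - z0) \<le> B"
    using x_bounded by blast
  obtain Bb where Bb: "\<And>t. \<beta> t \<le> Bb" using beta_bounded by blast
  have "d t i \<le> B + Bb * K" if i: "i < n" for t i
  proof -
    have "d t i \<le> norm (\<xi> t i - z0)"
      unfolding d_def P_def using closest_point_le[OF X_closed[OF i] S_X[OF z0 i], of "\<xi> t i"]
      by (simp add: dist_norm)
    also have "\<dots> \<le> norm (y t i - z0) + norm (\<xi> t i - y t i)"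
      using norm_triangle_ineq[of "y t i - z0" "\<xi> t i - y t i"] by simp
    also have "norm (y t i - z0) \<le> B"
    proof -
      have "y t i - z0 = (\<Sum>j<n. w i j *\<^sub>R (x t j - z0))"
        using y_eq[OF i, of t] w_row[OF i] by (simp add: scaleR_diff_right sum_subtractf scaleR_sum_left[symmetric])
      hence "norm (y t i - z0) \<le> (\<Sum>j<n. norm (w i j *\<^sub>R (x t j - z0)))"
        by (metis norm_sum)
      also have "\<dots> \<le> (\<Sum>j<n. w i j * B)"
        using w_nonneg[OF i] B by (intro sum_mono) (simp add: mult_left_mono)
      also have "\<dots> = B" using w_row[OF i] by (simp add: sum_distrib_right[symmetric])
      finally show ?thesis .
    qed
    also have "norm (\<xi> t i - y t i) \<le> Bb * K"
      using xi_y_le[OF i, of t] Bb[of t] K_nonneg by (meson mult_right_mono order_trans)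
    finally show ?thesis by simp
  qed
  thus ?thesis by blast
qed

lemma sum_y: "(\<Sum>i<n. y t i) = (\<Sum>j<n. x t j)"
proof -
  have "(\<Sum>i<n. y t i) = (\<Sum>i<n. \<Sum>j<n. w i j *\<^sub>R x t j)" by (intro sum.cong) (auto simp: y_eq)
  also have "\<dots> = (\<Sum>j<n. (\<Sum>i<n. w i j) *\<^sub>R x t j)"
    by (subst sum.swap) (simp add: scaleR_sum_left)
  also have "\<dots> = (\<Sum>j<n. x t j)" by (intro sum.cong) (auto simp: w_col)
  finally show ?thesis .
qed

lemma move_le: "norm (c (Suc t) - c t) \<le> \<beta> t * K + \<alpha> t * (1 / real n) * (\<Sum>i<n. d t i)"
proof -
  have "c (Suc t) - c t = (1 / real n) *\<^sub>R (\<Sum>i<n. x (Suc t) i - y t i)"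
    unfolding c_def by (simp add: sum_subtractf sum_y scaleR_diff_right)
  also have "(\<Sum>i<n. x (Suc t) i - y t i) = (\<Sum>i<n. - (\<beta> t *\<^sub>R dg i (y t i)) - \<alpha> t *\<^sub>R (\<xi> t i - P t i))"
    by (intro sum.cong) (auto simp: step \<xi>_def)
  finally have "norm (c (Suc t) - c t) = (1 / real n) * norm (\<Sum>i<n. - (\<beta> t *\<^sub>R dg i (y t i)) - \<alpha> t *\<^sub>R (\<xi> t i - P t i))"
    using n_real_pos by simp
  also have "\<dots> \<le> (1 / real n) * (\<Sum>i<n. norm (- (\<beta> t *\<^sub>R dg i (y t i)) - \<alpha> t *\<^sub>R (\<xi> t i - P t i)))"
    using n_real_pos by (intro mult_left_mono norm_sum) auto
  also have "\<dots> \<le> (1 / real n) * (\<Sum>i<n. \<beta> t * K + \<alpha> t * d t i)"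
  proof (intro mult_left_mono sum_mono)
    fix i assume "i \<in> {..<n}" hence i: "i < n" by simp
    have "norm (- (\<beta> t *\<^sub>R dg i (y t i)) - \<alpha> t *\<^sub>R (\<xi> t i - P t i))
       \<le> norm (\<beta> t *\<^sub>R dg i (y t i)) + norm (\<alpha> t *\<^sub>R (\<xi> t i - P t i))"
      by (metis norm_minus_cancel norm_triangle_ineq4)
    also have "\<dots> \<le> \<beta> t * K + \<alpha> t * d t i"
      unfolding d_def using beta_nonneg[of t] alpha_nonneg[of t] dg_bound[OF i]
      by (simp add: mult_left_mono)
    finally show "norm (- (\<beta> t *\<^sub>R dg i (y t i)) - \<alpha> t *\<^sub>R (\<xi> t i - P t i)) \<le> \<beta> t * K + \<alpha> t * d t i" .
  qed simp
  also have "\<dots> = \<beta> t * K + \<alpha> t * (1 / real n) * (\<Sum>i<n. d t i)"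
    using n_real_pos by (simp add: sum.distrib sum_distrib_left[symmetric] field_simps)
  finally show ?thesis .
qed

end



lemma clamp_lip:
  fixes lo hi u v :: real
  shows "\<bar>max lo (min hi u) - max lo (min hi v)\<bar> \<le> \<bar>u - v\<bar>"
  by (auto simp: max_def min_def abs_if)

context cfp begin

lemma move_lim: "(\<lambda>t. norm (c (Suc t) - c t)) \<longlonglongrightarrow> 0"
proof -
  obtain R where R: "\<And>t i. i < n \<Longrightarrow> d t i \<le> R" using d_bounded by blast
  show ?thesis
  proof (rule Lim_null_comparison[where g = "\<lambda>t. \<beta> t * K + \<alpha> t * R"])
    have "norm (c (Suc t) - c t) \<le> \<beta> t * K + \<alpha> t * R" for t
    proof -
      have "(1 / real n) * (\<Sum>i<n. d t i) \<le> (1 / real n) * (\<Sum>i<n. R)"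
        using R n_real_pos by (intro mult_left_mono sum_mono) auto
      also have "\<dots> = R" using n_real_pos by simp
      finally have "\<alpha> t * ((1 / real n) * (\<Sum>i<n. d t i)) \<le> \<alpha> t * R"
        using alpha_nonneg[of t] by (intro mult_left_mono)
      hence "\<alpha> t * (1 / real n) * (\<Sum>i<n. d t i) \<le> \<alpha> t * R" by (simp only: mult.assoc)
      thus ?thesis using move_le[of t] by linarith
    qed
    thus "\<forall>\<^sub>F t in sequentially. norm (norm (c (Suc t) - c t)) \<le> \<beta> t * K + \<alpha> t * R" by simp
    show "(\<lambda>t. \<beta> t * K + \<alpha> t * R) \<longlonglongrightarrow> 0"
      using tendsto_add[OF tendsto_mult_left_zero[OF beta_lim] tendsto_mult_left_zero[OF alpha_lim]] by simp
  qed
qed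

lemma no_gap:
  assumes \<delta>: "\<delta> > 0" and ev: "eventually (\<lambda>t. Gam (c t) + Del (c t) \<ge> 3 * \<delta>) sequentially"
  shows False
proof -
  obtain R0 where R0: "\<And>t i. i < n \<Longrightarrow> d t i \<le> R0" using d_bounded by blast
  define R where "R = max R0 0"
  have R: "\<And>t i. i < n \<Longrightarrow> d t i \<le> R" unfolding R_def using R0 by (meson max.coboundedI1)
  have R_nn: "R \<ge> 0" unfolding R_def by simp
  define C2 where "C2 = (2 * real n / \<delta>)\<^sup>2"
  define F where "F t = (2 / \<delta>) * K * Gs t + C2 * R * Hs t" for t
  have F_nn: "F t \<ge> 0" for t unfolding F_def C2_def using \<delta> K_nonneg R_nn Gs_nonneg[of t] Hs_nonneg[of t]
    by (intro add_nonneg_nonneg mult_nonneg_nonneg) auto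
  have sF: "summable F" unfolding F_def
    by (intro summable_add summable_mult summable_Gs summable_Hs)
  define clp where "clp v = max (5 * \<delta> / 4) (min (7 * \<delta> / 4) (Del v))" for v
  have E2: "eventually (\<lambda>t. K * (\<Sum>i<n. norm (y t i - c t)) < \<delta> / 2) sequentially"
  proof -
    have "(\<lambda>t. K * (\<Sum>i<n. norm (y t i - c t))) \<longlonglongrightarrow> 0"
      by (rule tendsto_mult_right_zero, rule tendsto_null_sum) (auto intro: y_c)
    thus ?thesis using \<delta> by (intro order_tendstoD(2)) auto
  qed
  have E3: "eventually (\<lambda>t. (\<Sum>i<n. norm (\<xi> t i - c t)) < \<delta> / 2) sequentially"
  proof -
    have "(\<lambda>t. (\<Sum>i<n. norm (\<xi> t i - c t))) \<longlonglongrightarrow> 0"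
      by (rule tendsto_null_sum) (auto intro: xi_c)
    thus ?thesis using \<delta> by (intro order_tendstoD(2)) auto
  qed
  have E4: "eventually (\<lambda>t. real n * norm (c (Suc t) - c t) < \<delta> / 4) sequentially"
  proof -
    have "(\<lambda>t. real n * norm (c (Suc t) - c t)) \<longlonglongrightarrow> 0"
      by (rule tendsto_mult_right_zero, rule move_lim)
    thus ?thesis using \<delta> by (intro order_tendstoD(2)) auto
  qed
  have F1: "\<beta> t \<le> (2 / \<delta>) * Gs t" if "Gam (c t) \<ge> \<delta>" "K * (\<Sum>i<n. norm (y t i - c t)) < \<delta> / 2" for t
  proof -
    have "Gam (c t) \<le> (\<Sum>i<n. gp i (y t i) + K * norm (c t - y t i))" unfolding Gam_def
      by (rule sum_mono) (use gp_lip in auto)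
    also have "\<dots> = (\<Sum>i<n. gp i (y t i)) + K * (\<Sum>i<n. norm (y t i - c t))"
      by (simp add: sum.distrib sum_distrib_left norm_minus_commute)
    finally have "(\<Sum>i<n. gp i (y t i)) \<ge> \<delta> / 2" using that by linarith
    hence "\<beta> t * (\<delta> / 2) \<le> \<beta> t * (\<Sum>i<n. gp i (y t i))" using beta_nonneg[of t] by (rule mult_left_mono)
    hence "\<beta> t * (\<delta> / 2) \<le> Gs t" unfolding Gs_def .
    thus ?thesis using \<delta> by (simp add: field_simps)
  qed
  have F2: "\<alpha> t \<le> C2 * Hs t" if "Del (c t) \<ge> \<delta>" "(\<Sum>i<n. norm (\<xi> t i - c t)) < \<delta> / 2" for t
  proof -
    have "Del (c t) \<le> (\<Sum>i<n. d t i + norm (\<xi> t i - c t))" unfolding Del_def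
    proof (rule sum_mono)
      fix i assume "i \<in> {..<n}" hence i: "i < n" by simp
      have "infdist (c t) (X i) \<le> infdist (\<xi> t i) (X i) + dist (c t) (\<xi> t i)" by (rule infdist_triangle)
      thus "infdist (c t) (X i) \<le> d t i + norm (\<xi> t i - c t)"
        using d_infdist[OF i, of t] by (simp add: dist_norm norm_minus_commute)
    qed
    also have "\<dots> = (\<Sum>i<n. d t i) + (\<Sum>i<n. norm (\<xi> t i - c t))" by (simp add: sum.distrib)
    finally have sd: "(\<Sum>i<n. d t i) \<ge> \<delta> / 2" using that by linarith
    have "\<exists>i<n. d t i \<ge> \<delta> / (2 * real n)"
    proof (rule ccontr)
      assume "\<not> ?thesis"
      hence "\<And>i. i \<in> {..<n} \<Longrightarrow> d t i < \<delta> / (2 * real n)" by auto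
      hence "(\<Sum>i<n. d t i) < (\<Sum>i<n. \<delta> / (2 * real n))"
        using n_pos by (intro sum_strict_mono) (auto simp: lessThan_empty_iff)
      also have "\<dots> = \<delta> / 2" using n_real_pos by simp
      finally show False using sd by simp
    qed
    then obtain i where i: "i < n" and di: "d t i \<ge> \<delta> / (2 * real n)" by blast
    have pos: "\<delta> / (2 * real n) > 0" using \<delta> n_real_pos by simp
    have "(\<delta> / (2 * real n))\<^sup>2 \<le> (d t i)\<^sup>2" using di pos by (intro power_mono) auto
    also have "\<dots> \<le> (\<Sum>i<n. (d t i)\<^sup>2)" by (rule member_le_sum) (use i in auto)
    finally have "\<alpha> t * (\<delta> / (2 * real n))\<^sup>2 \<le> Hs t" unfolding Hs_def
      using alpha_nonneg[of t] by (simp add: mult_left_mono)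
    moreover have "C2 * (\<delta> / (2 * real n))\<^sup>2 = 1" unfolding C2_def using \<delta> n_real_pos
      by (simp add: power_divide field_simps)
    ultimately have "\<alpha> t * 1 \<le> C2 * Hs t" using C2_def
      by (metis (no_types, lifting) mult.left_commute mult_left_mono zero_le_power2)
    thus ?thesis by simp
  qed
  have mv: "norm (c (Suc t) - c t) \<le> \<beta> t * K + \<alpha> t * R" for t
  proof -
    have "(1 / real n) * (\<Sum>i<n. d t i) \<le> (1 / real n) * (\<Sum>i<n. R)"
      using R n_real_pos by (intro mult_left_mono sum_mono) auto
    also have "\<dots> = R" using n_real_pos by simp
    finally have "\<alpha> t * ((1 / real n) * (\<Sum>i<n. d t i)) \<le> \<alpha> t * R"
      using alpha_nonneg[of t] by (intro mult_left_mono)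
    hence "\<alpha> t * (1 / real n) * (\<Sum>i<n. d t i) \<le> \<alpha> t * R" by (simp only: mult.assoc)
    thus ?thesis using move_le[of t] by linarith
  qed
  have Del_diff: "\<bar>Del u - Del v\<bar> \<le> real n * norm (u - v)" for u v
    using Del_lip[of u v] Del_lip[of v u] by (simp add: norm_minus_commute abs_le_iff)
  define EV where "EV t \<longleftrightarrow> Gam (c t) + Del (c t) \<ge> 3 * \<delta> \<and> K * (\<Sum>i<n. norm (y t i - c t)) < \<delta> / 2
      \<and> (\<Sum>i<n. norm (\<xi> t i - c t)) < \<delta> / 2 \<and> real n * norm (c (Suc t) - c t) < \<delta> / 4" for t
  have evEV: "eventually EV sequentially" unfolding EV_def
    using eventually_conj[OF ev eventually_conj[OF E2 eventually_conj[OF E3 E4]]] by simp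
  have step_bound: "\<bar>clp (c (Suc t)) - clp (c t)\<bar> \<le> real n * F t" if "EV t" for t
  proof -
    from that have e1: "Gam (c t) + Del (c t) \<ge> 3 * \<delta>" and e2: "K * (\<Sum>i<n. norm (y t i - c t)) < \<delta> / 2"
      and e3: "(\<Sum>i<n. norm (\<xi> t i - c t)) < \<delta> / 2" and e4: "real n * norm (c (Suc t) - c t) < \<delta> / 4"
      unfolding EV_def by auto
    have dd: "\<bar>Del (c (Suc t)) - Del (c t)\<bar> < \<delta> / 4" using Del_diff[of "c (Suc t)" "c t"] e4 by linarith
    show ?thesis
    proof (cases "Gam (c t) \<ge> \<delta> \<and> Del (c t) \<ge> \<delta>")
      case True
      have "\<bar>clp (c (Suc t)) - clp (c t)\<bar> \<le> \<bar>Del (c (Suc t)) - Del (c t)\<bar>" unfolding clp_def by (rule clamp_lip)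
      also have "\<dots> \<le> real n * norm (c (Suc t) - c t)" by (rule Del_diff)
      also have "\<dots> \<le> real n * (\<beta> t * K + \<alpha> t * R)" by (intro mult_left_mono mv) auto
      also have "\<beta> t * K + \<alpha> t * R \<le> F t"
      proof -
        have "\<beta> t \<le> (2 / \<delta>) * Gs t" using F1[of t] True e2 by blast
        hence "\<beta> t * K \<le> (2 / \<delta>) * Gs t * K" using K_nonneg by (rule mult_right_mono)
        moreover have "\<alpha> t \<le> C2 * Hs t" using F2[of t] True e3 by blast
        hence "\<alpha> t * R \<le> C2 * Hs t * R" using R_nn by (rule mult_right_mono)
        ultimately show ?thesis unfolding F_def by (simp add: algebra_simps)
      qed
      hence "real n * (\<beta> t * K + \<alpha> t * R) \<le> real n * F t" by (simp add: mult_left_mono)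
      finally show ?thesis .
    next
      case False
      have "clp (c (Suc t)) = clp (c t)"
      proof (cases "\<delta> \<le> Gam (c t)")
        case False
        hence "Del (c t) > 2 * \<delta>" using e1 by linarith
        hence "Del (c t) \<ge> 7 * \<delta> / 4" "Del (c (Suc t)) \<ge> 7 * \<delta> / 4" using dd \<delta> by linarith+
        thus ?thesis unfolding clp_def using \<delta> by simp
      next
        case True
        hence "\<not> \<delta> \<le> Del (c t)" using False by blast
        hence "Del (c t) \<le> 5 * \<delta> / 4" "Del (c (Suc t)) \<le> 5 * \<delta> / 4" using dd \<delta> by linarith+
        thus ?thesis unfolding clp_def using \<delta> by simp
      qed
      thus ?thesis using F_nn[of t] by simp
    qed
  qed
  have sdiff: "summable (\<lambda>t. clp (c (Suc t)) - clp (c t))"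
  proof (rule summable_comparison_test_ev[where g = "\<lambda>t. real n * F t"])
    show "\<forall>\<^sub>F t in sequentially. norm (clp (c (Suc t)) - clp (c t)) \<le> real n * F t"
      using evEV by eventually_elim (use step_bound in auto)
    show "summable (\<lambda>t. real n * F t)" by (intro summable_mult sF)
  qed
  have "(\<lambda>t. clp (c 0) + (\<Sum>s<t. clp (c (Suc s)) - clp (c s))) \<longlonglongrightarrow> clp (c 0) + (\<Sum>s. clp (c (Suc s)) - clp (c s))"
    by (intro tendsto_add tendsto_const summable_LIMSEQ sdiff)
  moreover have "(\<lambda>t. clp (c 0) + (\<Sum>s<t. clp (c (Suc s)) - clp (c s))) = (\<lambda>t. clp (c t))"
    by (rule ext) (simp add: sum_lessThan_telescope[of "\<lambda>s. clp (c s)"])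
  ultimately obtain L where L: "(\<lambda>t. clp (c t)) \<longlonglongrightarrow> L" by auto
  have evL: "eventually (\<lambda>t. \<bar>clp (c t) - L\<bar> < \<delta> / 8) sequentially"
  proof -
    have "(\<lambda>t. \<bar>clp (c t) - L\<bar>) \<longlonglongrightarrow> 0"
      by (rule tendsto_rabs_zero[OF LIM_zero[OF L]])
    thus ?thesis using \<delta> by (intro order_tendstoD(2)) auto
  qed
  have frG: "frequently (\<lambda>t. Gam (c t) < \<delta>) sequentially"
  proof (rule ccontr)
    assume "\<not> ?thesis"
    hence evG: "eventually (\<lambda>t. Gam (c t) \<ge> \<delta>) sequentially" by (simp add: not_frequently not_less)
    have "summable \<beta>"
    proof (rule summable_comparison_test_ev[where g = "\<lambda>t. (2 / \<delta>) * Gs t"])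
      show "\<forall>\<^sub>F t in sequentially. norm (\<beta> t) \<le> 2 / \<delta> * Gs t"
        using evG E2 by eventually_elim (use F1 beta_nonneg in auto)
      show "summable (\<lambda>t. 2 / \<delta> * Gs t)" by (intro summable_mult summable_Gs)
    qed
    thus False using beta_div by simp
  qed
  have frD: "frequently (\<lambda>t. Del (c t) < \<delta>) sequentially"
  proof (rule ccontr)
    assume "\<not> ?thesis"
    hence evD: "eventually (\<lambda>t. Del (c t) \<ge> \<delta>) sequentially" by (simp add: not_frequently not_less)
    have "summable \<alpha>"
    proof (rule summable_comparison_test_ev[where g = "\<lambda>t. C2 * Hs t"])
      show "\<forall>\<^sub>F t in sequentially. norm (\<alpha> t) \<le> C2 * Hs t"
        using evD E3 by eventually_elim (use F2 alpha_nonneg in auto)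
      show "summable (\<lambda>t. C2 * Hs t)" by (intro summable_mult summable_Hs)
    qed
    thus False using alpha_div by simp
  qed
  have "frequently (\<lambda>t. Gam (c t) < \<delta> \<and> (EV t \<and> \<bar>clp (c t) - L\<bar> < \<delta> / 8)) sequentially"
    by (intro frequently_eventually_frequently frG eventually_conj evEV evL)
  then obtain t1 where t1: "Gam (c t1) < \<delta>" "EV t1" "\<bar>clp (c t1) - L\<bar> < \<delta> / 8"
    using frequently_ex by blast
  have "frequently (\<lambda>t. Del (c t) < \<delta> \<and> (EV t \<and> \<bar>clp (c t) - L\<bar> < \<delta> / 8)) sequentially"
    by (intro frequently_eventually_frequently frD eventually_conj evEV evL)
  then obtain t2 where t2: "Del (c t2) < \<delta>" "\<bar>clp (c t2) - L\<bar> < \<delta> / 8"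
    using frequently_ex by blast
  have "Del (c t1) > 2 * \<delta>" using t1 unfolding EV_def by linarith
  hence "clp (c t1) = 7 * \<delta> / 4" unfolding clp_def using \<delta> by simp
  moreover have "clp (c t2) = 5 * \<delta> / 4" unfolding clp_def using \<delta> t2 by simp
  ultimately show False using t1(3) t2(2) \<delta> by linarith
qed

end



context cfp begin

lemma c_bounded: "\<exists>z0 B. \<forall>t. norm (c t - z0) \<le> B"
proof -
  obtain z0 B where B: "\<And>t i. i < n \<Longrightarrow> norm (x t i - z0) \<le> B" using x_bounded by blast
  have "norm (c t - z0) \<le> B" for t
  proof -
    have "c t - z0 = (1 / real n) *\<^sub>R (\<Sum>i<n. x t i - z0)"
      unfolding c_def using n_real_pos by (simp add: sum_subtractf sum_constant_scaleR scaleR_diff_right)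
    hence "norm (c t - z0) = (1 / real n) * norm (\<Sum>i<n. x t i - z0)" using n_real_pos by simp
    also have "\<dots> \<le> (1 / real n) * (\<Sum>i<n. B)"
      using n_real_pos B by (intro mult_left_mono order_trans[OF norm_sum sum_mono]) auto
    also have "\<dots> = B" using n_real_pos by simp
    finally show ?thesis .
  qed
  thus ?thesis by blast
qed

lemma cluster: "\<exists>l\<in>S. \<exists>q. strict_mono q \<and> (c \<circ> q) \<longlonglongrightarrow> l"
proof -
  define \<Phi> where "\<Phi> v = Gam v + Del v" for v
  have fr: "\<exists>t\<ge>N. \<Phi> (c t) < 1 / real (Suc k)" for k N
  proof -
    have "frequently (\<lambda>t. \<Phi> (c t) < 1 / real (Suc k)) sequentially"
    proof (rule ccontr)
      assume "\<not> ?thesis"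
      hence "eventually (\<lambda>t. \<Phi> (c t) \<ge> 1 / real (Suc k)) sequentially"
        by (simp add: not_frequently not_less)
      moreover have eq: "3 * (1 / (3 * real (Suc k))) = 1 / real (Suc k)" by (simp add: field_simps)
      ultimately have "eventually (\<lambda>t. Gam (c t) + Del (c t) \<ge> 3 * (1 / (3 * real (Suc k)))) sequentially"
        by (simp only: \<Phi>_def eq)
      thus False by (intro no_gap[of "1 / (3 * real (Suc k))"]) auto
    qed
    thus ?thesis unfolding frequently_sequentially by blast
  qed
  define f where "f k N = (SOME t. N \<le> t \<and> \<Phi> (c t) < 1 / real (Suc k))" for k N
  have f: "f k N \<ge> N \<and> \<Phi> (c (f k N)) < 1 / real (Suc k)" for k N
    unfolding f_def by (rule someI_ex) (use fr in blast)
  define r where "r = rec_nat (f 0 0) (\<lambda>k rk. f (Suc k) (Suc rk))"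
  have r0: "r 0 = f 0 0" and rS: "r (Suc k) = f (Suc k) (Suc (r k))" for k by (simp_all add: r_def)
  have smr: "strict_mono r" unfolding strict_mono_Suc_iff
  proof
    fix k show "r k < r (Suc k)" using f[where k="Suc k" and N="Suc (r k)"] rS[of k] by simp
  qed
  have Phr: "\<Phi> (c (r k)) < 1 / real (Suc k)" for k
  proof (cases k)
    case 0 then show ?thesis using f[where k=0 and N=0] r0 by simp
  next
    case (Suc m) then show ?thesis using f[where k="Suc m" and N="Suc (r m)"] rS[of m] by simp
  qed
  obtain z0 B where B: "\<And>t. norm (c t - z0) \<le> B" using c_bounded by blast
  have "bounded (range (c \<circ> r))" unfolding bounded_def
    by (rule exI[of _ z0], rule exI[of _ B]) (auto simp: dist_norm B[unfolded norm_minus_commute[of "c _"]])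
  then obtain l r2 where smr2: "strict_mono r2" and lim: "((c \<circ> r) \<circ> r2) \<longlonglongrightarrow> l"
    using bounded_imp_convergent_subsequence by blast
  define Lc where "Lc = real n * K + real n"
  have Phi_lip: "\<Phi> u \<le> \<Phi> v + Lc * norm (u - v)" for u v
    using Gam_lip[of u v] Del_lip[of u v] unfolding \<Phi>_def Lc_def by (simp add: algebra_simps)
  have "\<Phi> l \<le> 0"
  proof (rule LIMSEQ_le_const)
    show "(\<lambda>k. 1 / real (Suc k) + Lc * norm (l - c (r (r2 k)))) \<longlonglongrightarrow> 0"
    proof -
      have "(\<lambda>k. norm (c (r (r2 k)) - l)) \<longlonglongrightarrow> 0"
        using tendsto_norm_zero[OF LIM_zero[OF lim]] by (simp add: o_def)
      hence a: "(\<lambda>k. Lc * norm (l - c (r (r2 k)))) \<longlonglongrightarrow> 0"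
        by (simp add: norm_minus_commute tendsto_mult_right_zero)
      have b: "(\<lambda>k. 1 / real (Suc k)) \<longlonglongrightarrow> 0"
        using LIMSEQ_inverse_real_of_nat by (simp add: inverse_eq_divide)
      show ?thesis using tendsto_add[OF b a] by simp
    qed
    show "\<exists>N. \<forall>k\<ge>N. \<Phi> l \<le> 1 / real (Suc k) + Lc * norm (l - c (r (r2 k)))"
    proof (intro exI allI impI)
      fix k :: nat
      have "\<Phi> (c (r (r2 k))) < 1 / real (Suc (r2 k))" by (rule Phr)
      also have "\<dots> \<le> 1 / real (Suc k)"
        using seq_suble[OF smr2, of k] by (simp add: frac_le)
      finally show "\<Phi> l \<le> 1 / real (Suc k) + Lc * norm (l - c (r (r2 k)))"
        using Phi_lip[of l "c (r (r2 k))"] by linarith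
    qed
  qed
  hence G0: "Gam l = 0" and D0: "Del l = 0"
    using Gam_nonneg[of l] Del_nonneg[of l] unfolding \<Phi>_def by linarith+
  have gl: "g i l \<le> 0" if i: "i < n" for i
  proof -
    have "gp i l \<le> Gam l" unfolding Gam_def by (rule member_le_sum) (use i gp_nonneg in auto)
    hence "gp i l \<le> 0" using G0 by simp
    thus ?thesis unfolding gp_def by simp
  qed
  have Xl: "l \<in> X i" if i: "i < n" for i
  proof -
    have "infdist l (X i) \<le> Del l" unfolding Del_def by (rule member_le_sum) (use i infdist_nonneg in auto)
    hence "infdist l (X i) = 0" using D0 infdist_nonneg[of l "X i"] by simp
    hence "l \<in> closure (X i)" using in_closure_iff_infdist_zero[OF X_ne[OF i]] by simp
    thus ?thesis using closure_closed[OF X_closed[OF i]] by simp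
  qed
  have "l \<in> S" unfolding S_def cfp_solutions_def using gl Xl by blast
  moreover have "strict_mono (r \<circ> r2)" using smr smr2 by (rule strict_mono_o)
  moreover have "(c \<circ> (r \<circ> r2)) \<longlonglongrightarrow> l" using lim by (simp add: o_assoc)
  ultimately show ?thesis by blast
qed

lemma main_conv: "\<exists>xs\<in>S. \<forall>i<n. (\<lambda>t. x t i) \<longlonglongrightarrow> xs"
proof -
  obtain l q where l: "l \<in> S" and q: "strict_mono q" and lim: "(c \<circ> q) \<longlonglongrightarrow> l"
    using cluster by blast
  obtain Lv where Lv: "V l \<longlonglongrightarrow> Lv" using sums_and_conv(4)[OF l] by blast
  have xi: "(\<lambda>k. norm (x (q k) i - l)) \<longlonglongrightarrow> 0" if i: "i < n" for i
  proof -
    have a: "(\<lambda>k. norm (x (q k) i - c (q k))) \<longlonglongrightarrow> 0"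
      using LIMSEQ_subseq_LIMSEQ[OF x_c[OF i] q] by (simp add: o_def)
    have b: "(\<lambda>k. norm (c (q k) - l)) \<longlonglongrightarrow> 0"
      using tendsto_norm_zero[OF LIM_zero[OF lim]] by (simp add: o_def)
    show ?thesis using tri_lim[OF a b] .
  qed
  have "(\<lambda>k. V l (q k)) \<longlonglongrightarrow> 0"
  proof -
    have "(\<lambda>k. (norm (x (q k) i - l))\<^sup>2) \<longlonglongrightarrow> 0" if "i \<in> {..<n}" for i
      using tendsto_power[OF xi, of i 2] that by simp
    hence "(\<lambda>k. \<Sum>i<n. (norm (x (q k) i - l))\<^sup>2) \<longlonglongrightarrow> 0" by (rule tendsto_null_sum)
    thus ?thesis unfolding V_def .
  qed
  moreover have "(\<lambda>k. V l (q k)) \<longlonglongrightarrow> Lv" using LIMSEQ_subseq_LIMSEQ[OF Lv q] by (simp add: o_def)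
  ultimately have Lv0: "Lv = 0" using LIMSEQ_unique by blast
  have "(\<lambda>t. x t i) \<longlonglongrightarrow> l" if i: "i < n" for i
  proof -
    have "(\<lambda>t. (norm (x t i - l))\<^sup>2) \<longlonglongrightarrow> 0"
    proof (rule Lim_null_comparison[where g = "V l"])
      have "(norm (x t i - l))\<^sup>2 \<le> V l t" for t
        unfolding V_def by (rule member_le_sum) (use i in auto)
      thus "\<forall>\<^sub>F t in sequentially. norm ((norm (x t i - l))\<^sup>2) \<le> V l t" by simp
      show "V l \<longlonglongrightarrow> 0" using Lv Lv0 by simp
    qed
    hence "(\<lambda>t. norm (x t i - l)) \<longlonglongrightarrow> 0" by (rule sq_to_zero)
    thus ?thesis by (rule LIM_zero_cancel[OF tendsto_norm_zero_cancel])
  qed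
  thus ?thesis using l by blast
qed

end

theorem corollary3:
  fixes n :: nat
    and a :: "nat \<Rightarrow> nat \<Rightarrow> real"
    and g :: "nat \<Rightarrow> 'a::euclidean_space \<Rightarrow> real"
    and X :: "nat \<Rightarrow> 'a set"
    and dg :: "nat \<Rightarrow> 'a \<Rightarrow> 'a"
    and K h :: real
    and \<alpha> \<beta> :: "nat \<Rightarrow> real"
    and x :: "nat \<Rightarrow> nat \<Rightarrow> 'a"
  assumes n_pos: "n \<ge> 1"
    and a_symm: "\<And>i j. i < n \<Longrightarrow> j < n \<Longrightarrow> a i j = a j i"
    and a_nonneg: "\<And>i j. i < n \<Longrightarrow> j < n \<Longrightarrow> a i j \<ge> 0"
    and conn: "connected_graph n a"
    and g_convex: "\<And>i. i < n \<Longrightarrow> convex_on UNIV (g i)"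
    and g_cont: "\<And>i. i < n \<Longrightarrow> continuous_on UNIV (g i)"
    and X_closed: "\<And>i. i < n \<Longrightarrow> closed (X i)"
    and X_convex: "\<And>i. i < n \<Longrightarrow> convex (X i)"
    and sol_nonempty: "cfp_solutions n g X \<noteq> {}"
    and dg_sel: "\<And>i. i < n \<Longrightarrow> is_plus_subgrad_selection (g i) (dg i)"
    and K_nonneg: "K \<ge> 0"
    and dg_bound: "\<And>i y. i < n \<Longrightarrow> norm (dg i y) \<le> K"
    and alpha_range: "\<And>t. 0 \<le> \<alpha> t \<and> \<alpha> t \<le> 1"
    and alpha_div: "\<not> summable \<alpha>"
    and alpha_sq: "summable (\<lambda>t. (\<alpha> t)\<^sup>2)"
    and beta_nonneg: "\<And>t. \<beta> t \<ge> 0"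
    and beta_div: "\<not> summable \<beta>"
    and beta_sq: "summable (\<lambda>t. (\<beta> t)\<^sup>2)"
    and h_pos: "h > 0"
    and h_bound: "h * Max ((\<lambda>i. \<Sum>j<n. a i j) ` {..<n}) < 1"
    and dyn: "\<And>t i. i < n \<Longrightarrow>
      (let y = x t i + h *\<^sub>R (\<Sum>j<n. a i j *\<^sub>R (x t j - x t i));
           grad = \<beta> t *\<^sub>R dg i y;
           \<xi> = y - grad;
           \<phi> = \<alpha> t *\<^sub>R (\<xi> - closest_point (X i) \<xi>);
           u = h *\<^sub>R (\<Sum>j<n. a i j *\<^sub>R (x t j - x t i)) - grad - \<phi>
       in x (Suc t) i = x t i + u)"
  shows "(\<forall>i<n. \<forall>j<n. (\<lambda>t. norm (x t i - x t j)) \<longlonglongrightarrow> 0) \<and>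
         (\<exists>xs \<in> cfp_solutions n g X. \<forall>i<n. (\<lambda>t. x t i) \<longlonglongrightarrow> xs)"
proof -
  interpret cfp n a g X dg K h \<alpha> \<beta> x
    by unfold_locales (fact assms)+
  show ?thesis using consensus main_conv unfolding S_def by blast
qed

end
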